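(* Let $m\ge 1$ and let $\mathbf a=(a_1,\dots,a_m)$ be an admissible sequence. For a nonnegative integer $x$ define the $m\times m$ matrices $$\mathbf m(\mathbf a,x)=\left(\frac{(q^{2i+2x};q^2)_{a_j+1-2i}}{(q;q)_{a_j+1-2i}}\right)_{i,j=1}^m,\qquad \mathbf s(\mathbf a)=\left(\frac{1}{(q;q)_{a_j+1-2i}}\right)_{i,j=1}^m,$$ where in both matrices the $(i,j)$-entry is defined to be $0$ whenever $a_j+1-2i<0$. Then, as an identity of rational functions in $q$, $$\det \mathbf m(\mathbf a,x)=\left(\prod_{k=1}^m (q^{2x+2k};q)_{a_k-2k+1}\right)\det \mathbf s(\mathbf a).$$
   Context: $q$ is an indeterminate. For integers $n\ge 0$, $(a;q)_n=\prod_{j=0}^{n-1}(1-aq^j)$ (so $(a;q)_0=1$). A finite sequence of integers $\mathbf a=(a_1,\dots,a_m)$ is called admissible if it is strictly increasing and $2i-1\le a_i\le 2m$ for all $1\le i\le m$. *)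

theory Defs
  imports "Jordan_Normal_Form.Determinant" "HOL-Computational_Algebra.Polynomial"
          "HOL-Computational_Algebra.Fraction_Field"
begin

definition qpoch :: "'a::comm_ring_1 \<Rightarrow> 'a \<Rightarrow> nat \<Rightarrow> 'a" where
  "qpoch a q n = (\<Prod>j<n. 1 - a * q ^ j)"

definition qvar :: "rat poly fract" where
  "qvar = Fract [:0, 1:] 1"

text \<open>Admissible sequences (1-indexed in the paper; list index i-1 here).\<close>
definition admissible :: "int list \<Rightarrow> bool" where
  "admissible a \<longleftrightarrow> sorted_wrt (<) a \<and>
     (\<forall>i\<in>{1..length a}. 2 * int i - 1 \<le> a ! (i - 1) \<and> a ! (i - 1) \<le> 2 * int (length a))"

text \<open>Matrix m(a,x); entry (i,j) with 0-based indices corresponds to paper's (i+1,j+1).\<close>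
definition mmat :: "int list \<Rightarrow> nat \<Rightarrow> rat poly fract mat" where
  "mmat a x = mat (length a) (length a) (\<lambda>(i, j).
     (let e = a ! j + 1 - 2 * int (i + 1) in
      if e < 0 then 0
      else qpoch (qvar ^ (2 * (i + 1) + 2 * x)) (qvar ^ 2) (nat e) / qpoch qvar qvar (nat e)))"

definition smat :: "int list \<Rightarrow> rat poly fract mat" where
  "smat a = mat (length a) (length a) (\<lambda>(i, j).
     (let e = a ! j + 1 - 2 * int (i + 1) in
      if e < 0 then 0 else 1 / qpoch qvar qvar (nat e)))"

end

theory Submission
  imports Defs
begin

lemma qpoch_Suc: "qpoch a q (Suc n) = qpoch a q n * (1 - a * q ^ n)"
  unfolding qpoch_def by (simp add: mult.commute)

lemma qpoch_0[simp]: "qpoch a q 0 = 1"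
  unfolding qpoch_def by simp

definition sC :: "'a::field \<Rightarrow> 'a \<Rightarrow> nat \<Rightarrow> nat \<Rightarrow> 'a" where
  "sC q Y N d = (if 2*d \<le> N then (-1)^d * Y^d * q^(d*d) * qpoch Y (q^2) (N-d)
      / (qpoch (q^2) (q^2) d * qpoch q q (N-2*d)) else 0)"

definition gC :: "'a::field \<Rightarrow> 'a \<Rightarrow> nat \<Rightarrow> nat \<Rightarrow> 'a" where
  "gC q Y N d = (if d = 0 \<or> N+1 < 2*d then 0 else q^(N+1-2*d) * (-1)^d * Y^d * q^(d*d)
      * qpoch Y (q^2) (N+1-d) / (qpoch (q^2) (q^2) (d-1) * qpoch q q (N+1-2*d)))"

context
  fixes q :: "'a::field"
  assumes qn: "\<And>j. 0 < j \<Longrightarrow> q^j \<noteq> 1"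
begin

lemma qq_nz: "qpoch q q n \<noteq> 0"
proof (induction n)
  case (Suc n)
  have "q^(Suc n) \<noteq> 1" using qn by blast
  then have "1 - q * q^n \<noteq> 0" by simp
  then show ?case using Suc by (simp add: qpoch_Suc)
qed simp

lemma q2_nz: "qpoch (q^2) (q^2) n \<noteq> 0"
proof (induction n)
  case (Suc n)
  have h: "q^2 * (q^2)^n = q^(Suc (Suc (2*n)))"
    by (simp add: power_mult[symmetric] power_add[symmetric])
  have "q^(Suc (Suc (2*n))) \<noteq> 1" by (rule qn) simp
  then have "1 - q^2 * (q^2)^n \<noteq> 0" unfolding h by simp
  then show ?case using Suc by (simp add: qpoch_Suc)
qed simp

lemma one_minus_nz: "0 < j \<Longrightarrow> 1 - q^j \<noteq> 0" using qn by auto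

lemma caseA:
  fixes Y :: 'a
  assumes N: "N = 2*Suc e + k + 1"
  shows "(1 - q^(N+1)) * sC q Y (Suc N) (Suc e) - (1 - Y*q^N) * sC q Y N (Suc e)
     = gC q Y N (Suc e) - gC q Y N (Suc (Suc e))"
proof -
  define P where "P = qpoch Y (q^2) (e+k+2)"
  define Q where "Q = qpoch q q k"
  define R where "R = qpoch (q^2) (q^2) e"
  define A where "A = q^k"
  define B where "B = q^e"
  define C where "C = q^(e*e)"
  define Z where "Z = Y^e"
  define S where "S = ((-1)^e :: 'a)"
  have nz: "Q \<noteq> 0" "R \<noteq> 0" "1 - q * A \<noteq> 0" "1 - q^2*A \<noteq> 0" "1 - q^2*B^2 \<noteq> 0"
  proof -
    show "Q \<noteq> 0" "R \<noteq> 0" using qq_nz q2_nz unfolding Q_def R_def by auto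
    have "q*A = q^(Suc k)" "q^2*A = q^(Suc (Suc k))" "q^2*B^2 = q^(Suc (Suc (2*e)))"
      unfolding A_def B_def by (simp_all add: power_add[symmetric] power_mult[symmetric] mult.commute)
    then show "1 - q * A \<noteq> 0" "1 - q^2*A \<noteq> 0" "1 - q^2*B^2 \<noteq> 0"
      using one_minus_nz[of "Suc k"] one_minus_nz[of "Suc (Suc k)"] one_minus_nz[of "Suc (Suc (2*e))"]
      by auto
  qed
  have sq: "\<And>n. (q^2)^n = (q^n)^2" by (simp add: power_mult[symmetric] mult.commute)
  have P1: "qpoch Y (q^2) (e+k+3) = P * (1 - Y*q^4*B^2*A^2)"
  proof -
    have "qpoch Y (q^2) (e+k+3) = P * (1 - Y*(q^2)^(e+k+2))"
      unfolding P_def by (simp add: qpoch_Suc numeral_3_eq_3 numeral_2_eq_2)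
    moreover have "(q^2)^(e+k+2) = q^4*B^2*A^2" unfolding sq A_def B_def
      by (simp add: power_add power_mult_distrib power_mult[symmetric])
    ultimately show ?thesis by (simp add: mult.assoc)
  qed
  have Q1: "qpoch q q (Suc k) = Q*(1-q*A)" unfolding Q_def A_def by (simp add: qpoch_Suc)
  have Q2: "qpoch q q (Suc (Suc k)) = Q*(1-q*A)*(1-q^2*A)" unfolding Q_def A_def
    by (simp add: qpoch_Suc power2_eq_square)
  have R1: "qpoch (q^2) (q^2) (Suc e) = R*(1-q^2*B^2)" unfolding R_def B_def
    by (simp add: qpoch_Suc sq)
  have hS: "(-1)^Suc e = -S" "(-1)^Suc (Suc e) = S" unfolding S_def by simp_all
  have hZ: "Y^Suc e = Y*Z" "Y^Suc (Suc e) = Y*Y*Z" unfolding Z_def by simp_all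
  have ee: "Suc e * Suc e = 1 + e*2 + e*e" "Suc (Suc e) * Suc (Suc e) = 4 + e*4 + e*e"
    by (simp_all add: algebra_simps)
  have hC: "q^(Suc e * Suc e) = q*B^2*C" "q^(Suc (Suc e) * Suc (Suc e)) = q^4*B^4*C" unfolding B_def C_def
    by (simp_all only: ee power_add power_mult power_one_right)
  have hA: "q^(Suc (Suc k)) = q^2*A" "q^k = A"
    unfolding A_def N by (simp_all add: power_add power2_eq_square)
  have hle: "(2 * Suc e \<le> N) = True" "(2 * Suc e \<le> Suc N) = True"
     "(Suc e = 0 \<or> N+1 < 2 * Suc e) = False" "(Suc (Suc e) = 0 \<or> N+1 < 2 * Suc (Suc e)) = False"
    using N by auto
  have hd: "N - Suc e = e+k+2" "N - 2*Suc e = Suc k" "Suc N - Suc e = e+k+3" "Suc N - 2*Suc e = Suc (Suc k)"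
    "N + 1 - Suc e = e+k+3" "N + 1 - 2*Suc e = Suc (Suc k)" "Suc (Suc e) - 1 = Suc e" "Suc e - 1 = e"
    "N + 1 - Suc (Suc e) = e+k+2" "N + 1 - 2*Suc (Suc e) = k"
    using N by auto
  have s1: "sC q Y N (Suc e) = (-S) * (Y*Z) * (q*B^2*C) * P / ((R*(1-q^2*B^2)) * (Q*(1-q*A)))"
    unfolding sC_def by (simp only: hle hd if_True hS hZ hC R1 Q1 P_def[symmetric])
  have s2: "sC q Y (Suc N) (Suc e) = (-S) * (Y*Z) * (q*B^2*C) * (P * (1 - Y*q^4*B^2*A^2)) / ((R*(1-q^2*B^2)) * (Q*(1-q*A)*(1-q^2*A)))"
    unfolding sC_def by (simp only: hle hd if_True hS hZ hC R1 Q2 P1)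
  have g1: "gC q Y N (Suc e) = (q^2*A) * (-S) * (Y*Z) * (q*B^2*C) * (P * (1 - Y*q^4*B^2*A^2)) / (R * (Q*(1-q*A)*(1-q^2*A)))"
    unfolding gC_def by (simp only: hle hd if_False hS hZ hC hA Q2 P1 R_def[symmetric])
  have g2: "gC q Y N (Suc (Suc e)) = A * S * (Y*Y*Z) * (q^4*B^4*C) * P / ((R*(1-q^2*B^2)) * Q)"
    unfolding gC_def by (simp only: hle hd if_False hS hZ hC hA R1 Q_def[symmetric] P_def[symmetric])
  have eN: "N = 3 + e*2 + k" "N+1 = 4 + e*2 + k" using N by simp_all
  have pN: "q^N = q^3*B^2*A" "q^(N+1) = q^4*B^2*A" unfolding A_def B_def
    by (subst eN(1), simp only: power_add power_mult, subst eN(2), simp only: power_add power_mult)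
  show ?thesis unfolding s1 s2 g1 g2 pN
    using nz by (simp add: divide_simps) (simp add: algebra_simps power_numeral_reduce)
qed

lemma caseB:
  fixes Y :: 'a
  shows "(1 - q^(Suc k+1)) * sC q Y (Suc (Suc k)) 0 - (1 - Y*q^Suc k) * sC q Y (Suc k) 0
     = gC q Y (Suc k) 0 - gC q Y (Suc k) (Suc 0)"
proof -
  define P where "P = qpoch Y (q^2) (Suc k)"
  define Q where "Q = qpoch q q k"
  define A where "A = q^k"
  have sq: "\<And>n. (q^2)^n = (q^n)^2" by (simp add: power_mult[symmetric] mult.commute)
  have nz: "Q \<noteq> 0" "1 - q * A \<noteq> 0" "1 - q^2*A \<noteq> 0"
  proof -
    show "Q \<noteq> 0" using qq_nz unfolding Q_def by auto
    have "q*A = q^(Suc k)" "q^2*A = q^(Suc (Suc k))"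
      unfolding A_def by (simp_all add: power_add[symmetric] power_mult[symmetric] mult.commute)
    then show "1 - q * A \<noteq> 0" "1 - q^2*A \<noteq> 0"
      using one_minus_nz[of "Suc k"] one_minus_nz[of "Suc (Suc k)"] by auto
  qed
  have P1: "qpoch Y (q^2) (Suc (Suc k)) = P * (1 - Y*q^2*A^2)"
  proof -
    have "qpoch Y (q^2) (Suc (Suc k)) = P * (1 - Y*(q^2)^(Suc k))"
      unfolding P_def by (rule qpoch_Suc)
    moreover have "(q^2)^(Suc k) = q^2*A^2" unfolding sq A_def
      by (simp add: power_mult_distrib)
    ultimately show ?thesis by (simp add: mult.assoc)
  qed
  have Q1: "qpoch q q (Suc k) = Q*(1-q*A)" unfolding Q_def A_def by (simp add: qpoch_Suc)
  have Q2: "qpoch q q (Suc (Suc k)) = Q*(1-q*A)*(1-q^2*A)" unfolding Q_def A_def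
    by (simp add: qpoch_Suc power2_eq_square)
  have s1: "sC q Y (Suc k) 0 = P / (Q*(1-q*A))"
    unfolding sC_def by (simp add: Q1 P_def)
  have s2: "sC q Y (Suc (Suc k)) 0 = P * (1 - Y*q^2*A^2) / (Q*(1-q*A)*(1-q^2*A))"
    unfolding sC_def by (simp add: Q2 P1)
  have g2: "gC q Y (Suc k) (Suc 0) = - (A * Y * q * P / Q)"
    unfolding gC_def by (simp add: Q_def[symmetric] P_def[symmetric] A_def)
  have g1: "gC q Y (Suc k) 0 = 0" unfolding gC_def by simp
  have pN: "q^(Suc k) = q*A" "q^(Suc k + 1) = q^2*A" unfolding A_def by (simp_all add: power2_eq_square)
  show ?thesis unfolding s1 s2 g1 g2 pN
    using nz by (simp add: divide_simps) (simp add: algebra_simps power_numeral_reduce)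
qed

lemma caseC:
  fixes Y :: 'a
  shows "(1 - q^(0+1)) * sC q Y (Suc 0) 0 - (1 - Y*q^0) * sC q Y 0 0
     = gC q Y 0 0 - gC q Y 0 (Suc 0)"
  using one_minus_nz[of 1] unfolding sC_def gC_def by (simp add: qpoch_Suc)

lemma caseD:
  fixes Y :: 'a
  assumes N: "N = 2*Suc e"
  shows "(1 - q^(N+1)) * sC q Y (Suc N) (Suc e) - (1 - Y*q^N) * sC q Y N (Suc e)
     = gC q Y N (Suc e) - gC q Y N (Suc (Suc e))"
proof -
  define P where "P = qpoch Y (q^2) (Suc e)"
  define R where "R = qpoch (q^2) (q^2) e"
  define B where "B = q^e"
  define C where "C = q^(e*e)"
  define Z where "Z = Y^e"
  define S where "S = ((-1)^e :: 'a)"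
  have sq: "\<And>n. (q^2)^n = (q^n)^2" by (simp add: power_mult[symmetric] mult.commute)
  have nz: "R \<noteq> 0" "1 - q \<noteq> 0" "1 - q^2*B^2 \<noteq> 0"
  proof -
    show "R \<noteq> 0" using q2_nz unfolding R_def by auto
    have "q^2*B^2 = q^(Suc (Suc (2*e)))"
      unfolding B_def by (simp_all add: power_add[symmetric] power_mult[symmetric] mult.commute)
    then show "1 - q \<noteq> 0" "1 - q^2*B^2 \<noteq> 0"
      using one_minus_nz[of "Suc 0"] one_minus_nz[of "Suc (Suc (2*e))"] by auto
  qed
  have P1: "qpoch Y (q^2) (Suc (Suc e)) = P * (1 - Y*q^2*B^2)"
  proof -
    have "qpoch Y (q^2) (Suc (Suc e)) = P * (1 - Y*(q^2)^(Suc e))"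
      unfolding P_def by (rule qpoch_Suc)
    moreover have "(q^2)^(Suc e) = q^2*B^2" unfolding sq B_def
      by (simp add: power_mult_distrib)
    ultimately show ?thesis by (simp add: mult.assoc)
  qed
  have Q1: "qpoch q q (Suc 0) = 1 - q" by (simp add: qpoch_Suc)
  have R1: "qpoch (q^2) (q^2) (Suc e) = R*(1-q^2*B^2)" unfolding R_def B_def
    by (simp add: qpoch_Suc sq)
  have hS: "(-1)^Suc e = -S" unfolding S_def by simp_all
  have hZ: "Y^Suc e = Y*Z" unfolding Z_def by simp_all
  have ee: "Suc e * Suc e = 1 + e*2 + e*e"
    by (simp_all add: algebra_simps)
  have hC: "q^(Suc e * Suc e) = q*B^2*C" unfolding B_def C_def
    by (simp_all only: ee power_add power_mult power_one_right)
  have hle: "(2 * Suc e \<le> N) = True" "(2 * Suc e \<le> Suc N) = True"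
     "(Suc e = 0 \<or> N+1 < 2 * Suc e) = False" "(Suc (Suc e) = 0 \<or> N+1 < 2 * Suc (Suc e)) = True"
    using N by auto
  have hd: "N - Suc e = Suc e" "N - 2*Suc e = 0" "Suc N - Suc e = Suc (Suc e)" "Suc N - 2*Suc e = Suc 0"
    "N + 1 - Suc e = Suc (Suc e)" "N + 1 - 2*Suc e = Suc 0" "Suc e - 1 = e"
    using N by auto
  have s1: "sC q Y N (Suc e) = (-S) * (Y*Z) * (q*B^2*C) * P / ((R*(1-q^2*B^2)) * 1)"
    unfolding sC_def by (simp only: hle hd if_True hS hZ hC R1 qpoch_0 P_def[symmetric])
  have s2: "sC q Y (Suc N) (Suc e) = (-S) * (Y*Z) * (q*B^2*C) * (P * (1 - Y*q^2*B^2)) / ((R*(1-q^2*B^2)) * (1-q))"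
    unfolding sC_def by (simp only: hle hd if_True hS hZ hC R1 Q1 P1)
  have g1: "gC q Y N (Suc e) = q^(Suc 0) * (-S) * (Y*Z) * (q*B^2*C) * (P * (1 - Y*q^2*B^2)) / (R * (1-q))"
    unfolding gC_def by (simp only: hle hd if_False hS hZ hC Q1 P1 R_def[symmetric])
  have g2: "gC q Y N (Suc (Suc e)) = 0"
    unfolding gC_def by (simp only: hle if_True)
  have eN: "N = 2 + e*2" "N+1 = 3 + e*2" using N by simp_all
  have pN: "q^N = q^2*B^2" "q^(N+1) = q^3*B^2" unfolding B_def
    by (subst eN(1), simp only: power_add power_mult, subst eN(2), simp only: power_add power_mult)
  show ?thesis unfolding s1 s2 g1 g2 pN
    using nz by (simp add: divide_simps) (simp add: algebra_simps power_numeral_reduce)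
qed

lemma caseE:
  fixes Y :: 'a
  assumes N: "N + 1 = 2*Suc e"
  shows "(1 - q^(N+1)) * sC q Y (Suc N) (Suc e) - (1 - Y*q^N) * sC q Y N (Suc e)
     = gC q Y N (Suc e) - gC q Y N (Suc (Suc e))"
proof -
  define P where "P = qpoch Y (q^2) (Suc e)"
  define R where "R = qpoch (q^2) (q^2) e"
  define B where "B = q^e"
  define C where "C = q^(e*e)"
  define Z where "Z = Y^e"
  define S where "S = ((-1)^e :: 'a)"
  have sq: "\<And>n. (q^2)^n = (q^n)^2" by (simp add: power_mult[symmetric] mult.commute)
  have nz: "R \<noteq> 0" "1 - q^2*B^2 \<noteq> 0"
  proof -
    show "R \<noteq> 0" using q2_nz unfolding R_def by auto
    have "q^2*B^2 = q^(Suc (Suc (2*e)))"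
      unfolding B_def by (simp_all add: power_add[symmetric] power_mult[symmetric] mult.commute)
    then show "1 - q^2*B^2 \<noteq> 0"
      using one_minus_nz[of "Suc (Suc (2*e))"] by auto
  qed
  have R1: "qpoch (q^2) (q^2) (Suc e) = R*(1-q^2*B^2)" unfolding R_def B_def
    by (simp add: qpoch_Suc sq)
  have hS: "(-1)^Suc e = -S" unfolding S_def by simp_all
  have hZ: "Y^Suc e = Y*Z" unfolding Z_def by simp_all
  have ee: "Suc e * Suc e = 1 + e*2 + e*e"
    by (simp_all add: algebra_simps)
  have hC: "q^(Suc e * Suc e) = q*B^2*C" unfolding B_def C_def
    by (simp_all only: ee power_add power_mult power_one_right)
  have hle: "(2 * Suc e \<le> N) = False" "(2 * Suc e \<le> Suc N) = True"
     "(Suc e = 0 \<or> N+1 < 2 * Suc e) = False" "(Suc (Suc e) = 0 \<or> N+1 < 2 * Suc (Suc e)) = True"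
    using N by auto
  have hd: "Suc N - Suc e = Suc e" "Suc N - 2*Suc e = 0"
    "N + 1 - Suc e = Suc e" "N + 1 - 2*Suc e = 0" "Suc e - 1 = e"
    using N by auto
  have s1: "sC q Y N (Suc e) = 0"
    unfolding sC_def by (simp only: hle if_False)
  have s2: "sC q Y (Suc N) (Suc e) = (-S) * (Y*Z) * (q*B^2*C) * P / ((R*(1-q^2*B^2)) * 1)"
    unfolding sC_def by (simp only: hle hd if_True hS hZ hC R1 qpoch_0 P_def[symmetric])
  have g1: "gC q Y N (Suc e) = q^0 * (-S) * (Y*Z) * (q*B^2*C) * P / (R * 1)"
    unfolding gC_def by (simp only: hle hd if_False hS hZ hC qpoch_0 P_def[symmetric] R_def[symmetric])
  have g2: "gC q Y N (Suc (Suc e)) = 0"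
    unfolding gC_def by (simp only: hle if_True)
  have pN: "q^(N+1) = q^2*B^2" unfolding B_def N
    by (simp add: power_mult[symmetric] power_add[symmetric] mult.commute)
  show ?thesis unfolding s1 s2 g1 g2 pN
    using nz by (simp add: divide_simps)
qed

lemma caseF:
  fixes Y :: 'a
  assumes N: "N + 1 < 2*d"
  shows "(1 - q^(N+1)) * sC q Y (Suc N) d - (1 - Y*q^N) * sC q Y N d
     = gC q Y N d - gC q Y N (Suc d)"
  using N unfolding sC_def gC_def by auto

lemma termwise:
  fixes Y :: 'a
  shows "(1 - q^(N+1)) * sC q Y (Suc N) d - (1 - Y*q^N) * sC q Y N d
     = gC q Y N d - gC q Y N (Suc d)"
proof (cases d)
  case 0
  then show ?thesis
  proof (cases N)
    case 0 with \<open>d = 0\<close> show ?thesis using caseC by simp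
  next
    case (Suc k) with \<open>d = 0\<close> show ?thesis using caseB[of k Y] by simp
  qed
next
  case (Suc e)
  show ?thesis
  proof (cases "N + 1 < 2*d")
    case True then show ?thesis by (rule caseF)
  next
    case F1: False
    show ?thesis
    proof (cases "N + 1 = 2*d")
      case True then show ?thesis using caseE[of N e Y] Suc by simp
    next
      case F2: False
      show ?thesis
      proof (cases "N = 2*d")
        case True then show ?thesis using caseD[of N e Y] Suc by simp
      next
        case False
        then have "N = 2*Suc e + (N - 2*d - 1) + 1" using F1 F2 Suc by presburger
        then show ?thesis using caseA[of N e "N - 2*d - 1" Y] Suc by simp
      qed
    qed
  qed
qed


lemma core_sum:
  fixes Y :: 'a
  shows "N < K \<Longrightarrow> (\<Sum>d<K. sC q Y N d) = qpoch Y q N / qpoch q q N"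
proof (induction N arbitrary: K)
  case 0
  have "\<And>d. sC q Y 0 d = (if d = 0 then 1 else 0)" unfolding sC_def by auto
  then show ?case using 0 by (simp add: sum.delta)
next
  case (Suc N)
  have IH: "(\<Sum>d<K. sC q Y N d) = qpoch Y q N / qpoch q q N" using Suc by simp
  have "(\<Sum>d<K. (1 - q^(N+1)) * sC q Y (Suc N) d - (1 - Y*q^N) * sC q Y N d)
      = (\<Sum>d<K. gC q Y N d - gC q Y N (Suc d))" using termwise by simp
  also have "\<dots> = gC q Y N 0 - gC q Y N K" by (rule sum_lessThan_telescope')
  also have "\<dots> = 0" using Suc.prems unfolding gC_def by auto
  finally have E: "(1 - q^(N+1)) * (\<Sum>d<K. sC q Y (Suc N) d) = (1 - Y*q^N) * (\<Sum>d<K. sC q Y N d)"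
    by (simp add: sum_subtractf sum_distrib_left)
  have c: "1 - q^(N+1) \<noteq> 0" by (rule one_minus_nz) simp
  have "(\<Sum>d<K. sC q Y (Suc N) d) = ((1 - q^(N+1)) * (\<Sum>d<K. sC q Y (Suc N) d)) / (1 - q^(N+1))"
    using c by simp
  also have "\<dots> = (1 - Y*q^N) * (qpoch Y q N / qpoch q q N) / (1 - q^(N+1))"
    unfolding E IH ..
  also have "\<dots> = qpoch Y q (Suc N) / qpoch q q (Suc N)"
    using qq_nz[of N] by (simp add: qpoch_Suc field_simps)
  finally show ?case .
qed


lemma core_sum2:
  fixes Y :: 'a
  assumes "N < 2*K"
  shows "(\<Sum>d<K. sC q Y N d) = qpoch Y q N / qpoch q q N"
proof -
  have "(\<Sum>d<K. sC q Y N d) = (\<Sum>d<K+N+1. sC q Y N d)"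
  proof (rule sum.mono_neutral_left)
    show "\<forall>d\<in>{..<K+N+1} - {..<K}. sC q Y N d = 0"
    proof
      fix d assume "d \<in> {..<K+N+1} - {..<K}"
      then have "\<not> 2*d \<le> N" using assms by auto
      then show "sC q Y N d = 0" unfolding sC_def by (simp only: if_False)
    qed
  qed auto
  also have "\<dots> = qpoch Y q N / qpoch q q N" by (rule core_sum) simp
  finally show ?thesis .
qed

end

lemma qpoch_add: "qpoch a q (m + n) = qpoch a q m * qpoch (a * q^m) q n"
proof (induction n)
  case 0 show ?case by (simp add: qpoch_def)
next
  case (Suc n)
  have "qpoch a q (m + Suc n) = qpoch a q (m+n) * (1 - a*q^(m+n))"
    by (simp only: add_Suc_right qpoch_Suc)
  also have "\<dots> = qpoch a q m * (qpoch (a*q^m) q n * (1 - (a*q^m)*q^n))"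
    by (simp only: Suc.IH power_add mult.assoc)
  also have "\<dots> = qpoch a q m * qpoch (a*q^m) q (Suc n)"
    by (simp only: qpoch_Suc)
  finally show ?case .
qed

definition Cc :: "'a::field \<Rightarrow> 'a \<Rightarrow> nat \<Rightarrow> 'a" where
  "Cc q Y d = (-1)^d * Y^d * q^(d*d) * qpoch Y (q^2) d / qpoch (q^2) (q^2) d"

lemma sC_Cc:
  assumes "2*d \<le> N"
  shows "sC q Y N d = Cc q Y d * (qpoch (Y*(q^2)^d) (q^2) (N-2*d) / qpoch q q (N - 2*d))"
proof -
  have e: "N - d = d + (N - 2*d)" using assms by simp
  have h: "qpoch Y (q^2) (N-d) = qpoch Y (q^2) d * qpoch (Y*(q^2)^d) (q^2) (N-2*d)"
    unfolding e by (rule qpoch_add)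
  have c: "(2*d \<le> N) = True" using assms by simp
  show ?thesis unfolding sC_def Cc_def c if_True h
    by (simp only: times_divide_times_eq mult.assoc)
qed

lemma qvar_pow: "qvar ^ j = Fract ([:0,1:]^j) 1"
proof (induction j)
  case 0 show ?case by (simp only: power_0 One_fract_def)
next
  case (Suc j) show ?case
    by (simp only: power_Suc Suc.IH) (simp only: qvar_def mult_fract mult_1)
qed

lemma qvar_ne1: "0 < j \<Longrightarrow> qvar ^ j \<noteq> 1"
proof
  assume j: "0 < j" and h: "qvar ^ j = 1"
  then have "Fract ([:0,1:]^j) 1 = Fract (1::rat poly) 1" by (simp only: qvar_pow One_fract_def)
  then have "([:0,1:]^j :: rat poly) = 1" by (simp only: eq_fract(1)[OF one_neq_zero one_neq_zero] mult_1_right)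
  then have "degree ([:0,1:]^j :: rat poly) = 0" by simp
  moreover have "degree ([:0,1:]^j :: rat poly) = j" by (rule degree_linear_power)
  ultimately show False using j by simp
qed


lemma sum_shift_if:
  fixes h :: "nat \<Rightarrow> 'a::comm_monoid_add"
  shows "i \<le> n \<Longrightarrow> (\<Sum>l<n. if i \<le> l then h l else 0) = (\<Sum>d<n-i. h (i+d))"
proof (induction n)
  case 0 then show ?case by simp
next
  case (Suc n)
  show ?case
  proof (cases "i = Suc n")
    case True then show ?thesis by simp
  next
    case False
    then have "i \<le> n" using Suc.prems by simp
    then have "Suc n - i = Suc (n - i)" by simp
    then show ?thesis using Suc.IH \<open>i \<le> n\<close> by simp
  qed
qed

lemma qpoch_qvar_nz: "0 < c \<Longrightarrow> qpoch (qvar^c) qvar m \<noteq> 0"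
proof (induction m)
  case (Suc m)
  have "qvar^c * qvar^m = qvar^(c+m)" by (simp add: power_add)
  moreover have "qvar^(c+m) \<noteq> 1" using Suc.prems by (intro qvar_ne1) simp
  ultimately have "1 - qvar^c * qvar^m \<noteq> 0" by simp
  then show ?case using Suc by (simp add: qpoch_Suc)
qed simp

theorem theorem1:
  fixes a :: "int list" and x :: nat
  assumes "length a \<ge> 1" and "admissible a"
  shows "det (mmat a x) =
    (\<Prod>k\<in>{1..length a}. qpoch (qvar ^ (2 * x + 2 * k)) qvar (nat (a ! (k - 1) - 2 * int k + 1)))
      * det (smat a)"
proof -
  define n where "n = length a"
  have bnd: "2*int j + 1 \<le> a!j \<and> a!j \<le> 2*int n" if "j < n" for j
  proof -
    have "Suc j \<in> {1..length a}" using that unfolding n_def by simp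
    then show ?thesis using assms(2) unfolding admissible_def n_def by fastforce
  qed
  define g where "g m = qpoch (qvar^(2*x+1)) qvar m" for m
  have gnz: "g m \<noteq> 0" for m unfolding g_def by (rule qpoch_qvar_nz) simp
  define K where "K = mat n n (\<lambda>(i,l). if i \<le> l then g (2*i+1) * Cc qvar (qvar^(2*(i+1)+2*x)) (l-i) else 0)"
  define D where "D = mat n n (\<lambda>(i,j). if i = j then g (nat (a!j)) else 0)"
  have Mc: "mmat a x \<in> carrier_mat n n" and Sc: "smat a \<in> carrier_mat n n"
    and Kc: "K \<in> carrier_mat n n" and Dc: "D \<in> carrier_mat n n"
    by (simp_all add: mmat_def smat_def K_def D_def n_def)
  have KM: "K * mmat a x = smat a * D"
  proof (rule eq_matI)
    fix i j assume i: "i < dim_row (smat a * D)" and j: "j < dim_col (smat a * D)"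
    then have i: "i<n" and j: "j<n" using Sc Dc by auto
    define Y where "Y = qvar^(2*(i+1)+2*x)"
    have Ment: "mmat a x $$ (l,j) = (if a!j + 1 - 2*int(l+1) < 0 then 0 else
       qpoch (qvar^(2*(l+1)+2*x)) (qvar^2) (nat (a!j + 1 - 2*int(l+1))) / qpoch qvar qvar (nat (a!j + 1 - 2*int(l+1))))"
      if "l < n" for l
      using that j by (simp add: mmat_def n_def Let_def)
    have lhs: "(K * mmat a x) $$ (i,j) = (\<Sum>l<n. if i \<le> l then g(2*i+1) * Cc qvar Y (l-i) * mmat a x $$ (l,j) else 0)"
      using i j Mc Kc by (auto simp add: K_def scalar_prod_def Y_def atLeast0LessThan intro!: sum.cong)
    have rhs: "(smat a * D) $$ (i,j) = smat a $$ (i,j) * g (nat (a!j))"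
    proof -
      have "(smat a * D) $$ (i,j) = (\<Sum>k<n. smat a $$ (i,k) * (if k = j then g (nat (a!j)) else 0))"
        using i j Sc Dc by (auto simp add: D_def scalar_prod_def atLeast0LessThan intro!: sum.cong)
      also have "\<dots> = (\<Sum>k<n. if k = j then smat a $$ (i,k) * g (nat (a!j)) else 0)"
        by (rule sum.cong) auto
      also have "\<dots> = smat a $$ (i,j) * g (nat (a!j))" using j by simp
      finally show ?thesis .
    qed
    have Sent: "smat a $$ (i,j) = (if a!j + 1 - 2*int(i+1) < 0 then 0 else 1 / qpoch qvar qvar (nat (a!j + 1 - 2*int(i+1))))"
      using i j by (simp add: smat_def n_def Let_def)
    show "(K * mmat a x) $$ (i,j) = (smat a * D) $$ (i,j)"
    proof (cases "a!j + 1 - 2*int(i+1) < 0")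
      case True
      have "(\<Sum>l<n. if i \<le> l then g(2*i+1) * Cc qvar Y (l-i) * mmat a x $$ (l,j) else 0) = 0"
      proof (rule sum.neutral, intro ballI)
        fix l assume "l \<in> {..<n}"
        then have "l < n" by simp
        show "(if i \<le> l then g(2*i+1) * Cc qvar Y (l-i) * mmat a x $$ (l,j) else 0) = 0"
          using True Ment[OF \<open>l<n\<close>] by auto
      qed
      then show ?thesis unfolding lhs rhs Sent using True by simp
    next
      case False
      define N where "N = nat (a!j + 1 - 2*int(i+1))"
      have Nint: "int N = a!j + 1 - 2*int(i+1)" using False unfolding N_def by simp
      have ii: "int (i+1) = int i + 1" by simp
      have N2': "int N < 2 * (int n - int i)" using bnd[OF j] Nint ii by presburger
      have "int N < int (2*(n-i))" using N2' i by (simp add: of_nat_diff)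
      then have N2: "N < 2*(n-i)" by (simp only: of_nat_less_iff)
      have tm: "g(2*i+1) * Cc qvar Y d * mmat a x $$ (i+d,j) = g(2*i+1) * sC qvar Y N d"
        if "d < n - i" for d
      proof -
        have ld: "i + d < n" using that by simp
        show ?thesis
        proof (cases "2*d \<le> N")
          case True
          have e1: "a!j + 1 - 2*int(i+d+1) = int (N - 2*d)" using True Nint by simp
          have e2: "qvar^(2*(i+d+1)+2*x) = Y * (qvar^2)^d"
            unfolding Y_def by (simp add: power_add[symmetric] power_mult[symmetric] algebra_simps)
          show ?thesis unfolding Ment[OF ld] e1 e2 sC_Cc[OF True] by simp
        next
          case False
          have "a!j + 1 - 2*int(i+d+1) < 0" using False Nint by simp
          then show ?thesis unfolding Ment[OF ld] sC_def using False by simp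
        qed
      qed
      have "(K * mmat a x) $$ (i,j) = (\<Sum>d<n-i. g(2*i+1) * Cc qvar Y d * mmat a x $$ (i+d,j))"
        unfolding lhs using i by (subst sum_shift_if) simp_all
      also have "\<dots> = (\<Sum>d<n-i. g(2*i+1) * sC qvar Y N d)"
        by (rule sum.cong[OF refl], rule tm) simp
      also have "\<dots> = g(2*i+1) * (qpoch Y qvar N / qpoch qvar qvar N)"
        by (simp add: sum_distrib_left[symmetric] core_sum2[OF qvar_ne1 N2])
      also have "\<dots> = (smat a * D) $$ (i,j)"
      proof -
        have "nat (a!j) = (2*i+1) + N" using Nint by simp
        have ex: "2*x+1+(2*i+1) = 2*(i+1)+2*x" by simp
        have qy: "qvar^(2*x+1)*qvar^(2*i+1) = Y" unfolding Y_def by (simp only: power_add[symmetric] ex)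
        have "g (nat (a!j)) = g ((2*i+1) + N)" using \<open>nat (a!j) = (2*i+1) + N\<close> by simp
        also have "\<dots> = g (2*i+1) * qpoch (qvar^(2*x+1)*qvar^(2*i+1)) qvar N" unfolding g_def by (rule qpoch_add)
        finally have "g (nat (a!j)) = g (2*i+1) * qpoch Y qvar N" unfolding qy .
        then show ?thesis unfolding rhs Sent N_def[symmetric] using False by simp
      qed
      finally show ?thesis .
    qed
  qed (use Sc Dc Kc Mc in auto)
  have utK: "upper_triangular K" unfolding upper_triangular_def K_def using Kc by auto
  have utD: "upper_triangular D" unfolding upper_triangular_def D_def using Dc by auto
  have detK: "det K = (\<Prod>i<n. g (2*i+1))"
    unfolding det_upper_triangular[OF utK Kc] prod_list_diag_prod
    using Kc by (simp add: K_def Cc_def atLeast0LessThan)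
  have detD: "det D = (\<Prod>i<n. g (nat (a!i)))"
    unfolding det_upper_triangular[OF utD Dc] prod_list_diag_prod
    using Dc by (simp add: D_def atLeast0LessThan)
  have detKnz: "det K \<noteq> 0" unfolding detK using gnz by simp
  have E: "det K * det (mmat a x) = det (smat a) * det D"
    using det_mult[OF Kc Mc] det_mult[OF Sc Dc] KM by simp
  have fac: "qpoch (qvar ^ (2 * x + 2 * Suc i)) qvar (nat (a ! (Suc i - 1) - 2 * int (Suc i) + 1))
      = g (nat (a!i)) / g (2*i+1)" if "i < n" for i
  proof -
    define L where "L = nat (a ! i - 2 * int (Suc i) + 1)"
    have "nat (a!i) = (2*i+1) + L" unfolding L_def using bnd[OF that] by (simp add: nat_eq_iff)
    have ex: "2*x+1+(2*i+1) = 2*x + 2*Suc i" by simp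
    have qy: "qvar^(2*x+1)*qvar^(2*i+1) = qvar^(2*x + 2*Suc i)" by (simp only: power_add[symmetric] ex)
    have "g (nat (a!i)) = g ((2*i+1) + L)" using \<open>nat (a!i) = (2*i+1) + L\<close> by simp
    also have "\<dots> = g (2*i+1) * qpoch (qvar^(2*x+1)*qvar^(2*i+1)) qvar L" unfolding g_def by (rule qpoch_add)
    finally have "g (nat (a!i)) = g (2*i+1) * qpoch (qvar^(2*x + 2*Suc i)) qvar L" unfolding qy .
    then show ?thesis using gnz[of "2*i+1"] unfolding L_def by simp
  qed
  have P: "(\<Prod>k\<in>{1..length a}. qpoch (qvar ^ (2 * x + 2 * k)) qvar (nat (a ! (k - 1) - 2 * int k + 1)))
      = det D / det K"
  proof -
    have "(\<Prod>k\<in>{1..length a}. qpoch (qvar ^ (2 * x + 2 * k)) qvar (nat (a ! (k - 1) - 2 * int k + 1)))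
        = (\<Prod>i<n. qpoch (qvar ^ (2 * x + 2 * Suc i)) qvar (nat (a ! (Suc i - 1) - 2 * int (Suc i) + 1)))"
      unfolding n_def One_nat_def by (rule prod.atLeast1_atMost_eq)
    also have "\<dots> = (\<Prod>i<n. g (nat (a!i)) / g (2*i+1))"
      by (rule prod.cong[OF refl], rule fac) simp
    also have "\<dots> = det D / det K" unfolding detK detD by (rule prod_dividef)
    finally show ?thesis .
  qed
  have "det (mmat a x) = det (smat a) * det D / det K"
    using E detKnz by (simp add: field_simps)
  then show ?thesis unfolding P by simp

qed

end
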